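(* Let $s$ and $z$ be random signals on $\mathbb{S}^2$, both bandlimited to degree $L_f$, with spherical harmonic coefficients having finite second moments. Assume $z$ has zero mean, that $s$ and $z$ are uncorrelated, i.e. $\mathbb{E}\{(s)_n\overline{(z)_{n'}}\}=\mathbb{E}\{(z)_n\overline{(s)_{n'}}\}=0$ for all $n,n'$, and that the spectral covariance matrices $\mathbf{C}^s=(C^s_{nn'})$, $C^s_{nn'}=\mathbb{E}\{(s)_n\overline{(s)_{n'}}\}$, and $\mathbf{C}^z=(C^z_{nn'})$, $C^z_{nn'}=\mathbb{E}\{(z)_n\overline{(z)_{n'}}\}$, $0\le n,n'\le N_f$, are known. Let $f=s+z$. Consider the mean square error in the joint $SO(3)$-spectral domain $$\varepsilon=\mathbb{E}\Big\{\sum_{u=0}^{N_g}\big\|\nu(\cdot;u)-g_s(\cdot;u)\big\|_{SO(3)}^2\Big\},$$ viewed as a function of the filter coefficients $\big(\zeta(\cdot;u)\big)^p_{q,k}$, where $\nu$ is the filtered representation of $g_f$ defined in the context. For $0\le p\le L_h-1$, $|q|\le p$, $0\le u\le N_g$, let $\mathbf{F}(p,q,u)\in\mathbb{C}^{2p+1}$ have entries $F_k=\big(\zeta(\cdot;u)\big)^p_{q,k}$, $|k|\le p$. Let $\mathbf{A}(p,u)$ be the $(2p+1)\times(2p+1)$ matrix and $\mathbf{b}(p,q,u)\in\mathbb{C}^{2p+1}$ the vector with entries, for $|k|,|k'|\le p$, $$A_{k',k}=\sum_{n=0}^{N_f}\sum_{n'=0}^{N_f}T(n;p,k;u)\,\overline{T(n';p,k';u)}\,\big(C^s_{nn'}+C^z_{nn'}\big),$$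 $$b_{k'}=\sum_{n=0}^{N_f}\sum_{n'=0}^{N_f}T(n;p,q;u)\,\overline{T(n';p,k';u)}\,C^s_{nn'}.$$ Then the filter minimizing $\varepsilon$ is obtained by solving the linear systems $$\mathbf{A}(p,u)\,\mathbf{F}(p,q,u)=\mathbf{b}(p,q,u)\qquad\text{for all }0\le p\le L_h-1,\ |q|\le p,\ 0\le u\le N_g.$$ Precisely: every choice of filter coefficients satisfying all these systems minimizes $\varepsilon$; conversely, any minimizer satisfies the system for every $(p,q,u)$ with $\sum_{q'=-p}^{p}|(h)_p^{q'}|^2\neq 0$. (When a system is singular, a solution, e.g. via the Moore–Penrose pseudo-inverse, is used.)
   Context: Spherical harmonics $Y_\ell^m$ ($\ell\ge 0$, $|m|\le \ell$) form an orthonormal basis of $L^2(\mathbb{S}^2)$ with inner product $\langle f,h\rangle=\int_{\mathbb{S}^2}f(\hat x)\overline{h(\hat x)}\,ds(\hat x)$, $ds=\sin\theta\,d\theta\,d\phi$, and satisfy $\overline{Y_\ell^m}=(-1)^mY_\ell^{-m}$. Single index: $n=\ell(\ell+1)+m$, $Y_n=Y_\ell^m$, $(f)_n=(f)_\ell^m=\langle f,Y_\ell^m\rangle$. A signal is bandlimited to degree $L$ if $(f)_\ell^m=0$ for $\ell\ge L$, i.e. $(f)_n=0$ for $n\ge L^2$. $SO(3)$ is parametrized by Euler angles $\rho=(\varphi,\vartheta,\omega)$ (zyz convention), with measure $d\rho=d\varphi\,\sin\vartheta\,d\vartheta\,d\omega$, inner product $\langle g,\nu\rangle_{SO(3)}=\int_{SO(3)}g\bar\nu\,d\rho$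 and norm $\|g\|_{SO(3)}=\langle g,g\rangle_{SO(3)}^{1/2}$. The Wigner-$D$ functions $D^\ell_{m,m'}(\rho)$ satisfy $\int_{SO(3)}D^\ell_{m,m'}\overline{D^{\ell'}_{k,k'}}\,d\rho=\frac{8\pi^2}{2\ell+1}\delta_{\ell\ell'}\delta_{mk}\delta_{m'k'}$, and every $g\in L^2(SO(3))$ expands as $g=\sum_{\ell,m,m'}(g)^\ell_{m,m'}D^\ell_{m,m'}$ with $(g)^\ell_{m,m'}=\frac{2\ell+1}{8\pi^2}\langle g,D^\ell_{m,m'}\rangle_{SO(3)}$. The rotation operator $\mathcal{D}(\rho)$ on $L^2(\mathbb{S}^2)$ satisfies $\langle\mathcal{D}(\rho)h,Y_\ell^m\rangle=\sum_{m'=-\ell}^{\ell}D^\ell_{m,m'}(\rho)(h)_\ell^{m'}$. Spherical harmonic triple product: $T(n;p,q;u)=\int_{\mathbb{S}^2}Y_n(\hat x)Y_p^q(\hat x)\overline{Y_u(\hat x)}\,ds(\hat x)$. Fixed window $h\in L^2(\mathbb{S}^2)$ bandlimited to degree $L_h$. Set $L_g=L_f+L_h-1$, $N_f=L_f^2-1$, $N_g=L_g^2-1$. The DSLSHT of a signal $d$ bandlimited to $L_f$ is $g_d(\rho;u)=\int_{\mathbb{S}^2}d(\hat x)\,(\mathcal{D}(\rho)h)(\hat x)\,\overline{Y_u(\hat x)}\,ds(\hat x)$, $0\le u\le N_g$; its Wigner-$D$ coefficients in $\rho$ are $\big(g_d(\cdot;u)\big)^p_{q,q'}=\sum_{n=0}^{N_f}(d)_n(h)_p^{q'}T(n;p,q;u)$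 for $p\le L_h-1$ (and zero for $p\ge L_h$). Filter: for each $0\le u\le N_g$, a function $\zeta(\rho;u)=\sum_{p=0}^{L_h-1}\sum_{q,q'=-p}^{p}\big(\zeta(\cdot;u)\big)^p_{q,q'}D^p_{q,q'}(\rho)$. Filtered representation (SO(3) convolution of $g_f(\cdot;u)$ with $\zeta(\cdot;u)$): $$\nu(\rho;u)=\sum_{p=0}^{L_h-1}\sum_{q,q'=-p}^{p}\sum_{k=-p}^{p}\big(g_f(\cdot;u)\big)^p_{k,q'}\big(\zeta(\cdot;u)\big)^p_{q,k}D^p_{q,q'}(\rho).$$ *)

theory Defs
  imports "HOL-Probability.Probability" "HOL-Computational_Algebra.Polynomial"
          "HOL-Library.Discrete_Functions"
begin

text \<open>Associated Legendre function via Rodrigues' formula (Condon-Shortley phase),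
  valid for all -l <= m <= l:
  P_l^m(x) = (-1)^m / (2^l l!) (1-x^2)^(m/2) d^(l+m)/dx^(l+m) (x^2-1)^l.\<close>
definition assoc_legendre :: "nat \<Rightarrow> int \<Rightarrow> real \<Rightarrow> real" where
  "assoc_legendre l m x =
     (-1) ^ nat \<bar>m\<bar> / (2 ^ l * fact l) * (1 - x\<^sup>2) powr (real_of_int m / 2)
     * poly ((pderiv ^^ nat (int l + m)) ([:-1, 0, 1:] ^ l)) x"

definition sph_harm :: "nat \<Rightarrow> int \<Rightarrow> real \<Rightarrow> real \<Rightarrow> complex" where
  "sph_harm l m \<theta> \<phi> =
     complex_of_real (sqrt ((2 * real l + 1) / (4 * pi) * fact (nat (int l - m)) / fact (nat (int l + m)))
       * assoc_legendre l m (cos \<theta>)) * exp (\<i> * of_int m * complex_of_real \<phi>)"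

text \<open>Single index n = l(l+1)+m.\<close>
definition deg_of :: "nat \<Rightarrow> nat" where "deg_of n = floor_sqrt n"
definition ord_of :: "nat \<Rightarrow> int" where
  "ord_of n = int n - int (deg_of n * (deg_of n + 1))"
definition sph_harm_idx :: "nat \<Rightarrow> real \<Rightarrow> real \<Rightarrow> complex" where
  "sph_harm_idx n = sph_harm (deg_of n) (ord_of n)"

definition sphere_integral :: "(real \<Rightarrow> real \<Rightarrow> complex) \<Rightarrow> complex" where
  "sphere_integral F =
     (LINT x:{0..pi} \<times> {0..2*pi}|lborel. complex_of_real (sin (fst x)) * F (fst x) (snd x))"

definition triple :: "nat \<Rightarrow> nat \<Rightarrow> int \<Rightarrow> nat \<Rightarrow> complex" where
  "triple n p q u = sphere_integral
     (\<lambda>\<theta> \<phi>. sph_harm_idx n \<theta> \<phi> * sph_harm p q \<theta> \<phi> * cnj (sph_harm_idx u \<theta> \<phi>))"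

section \<open>SO(3), Euler angles rho = (varphi, vartheta, omega)\<close>

definition SO3_box :: "(real \<times> real \<times> real) set" where
  "SO3_box = {0..2*pi} \<times> {0..pi} \<times> {0..2*pi}"

definition so3_inner :: "(real \<times> real \<times> real \<Rightarrow> complex) \<Rightarrow> (real \<times> real \<times> real \<Rightarrow> complex) \<Rightarrow> complex" where
  "so3_inner g \<nu> = (LINT \<rho>:SO3_box|lborel. complex_of_real (sin (fst (snd \<rho>))) * g \<rho> * cnj (\<nu> \<rho>))"

definition so3_norm :: "(real \<times> real \<times> real \<Rightarrow> complex) \<Rightarrow> real" where
  "so3_norm g = sqrt (Re (so3_inner g g))"

text \<open>Signals bandlimited to L_f are represented by their coefficient sequences
  d n = (d)_n.  Wigner-D coefficient of g_d(.;u):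
  (g_d(.;u))^p_{q,q'} = sum_{n=0}^{N_f} (d)_n (h)_p^{q'} T(n;p,q;u).\<close>
definition g_coef :: "nat \<Rightarrow> (nat \<Rightarrow> int \<Rightarrow> complex) \<Rightarrow> (nat \<Rightarrow> complex)
                     \<Rightarrow> nat \<Rightarrow> nat \<Rightarrow> int \<Rightarrow> int \<Rightarrow> complex" where
  "g_coef Lf h d u p q q' = (\<Sum>n\<le>Lf\<^sup>2 - 1. d n * h p q' * triple n p q u)"

definition g_fun :: "(nat \<Rightarrow> int \<Rightarrow> int \<Rightarrow> real \<times> real \<times> real \<Rightarrow> complex) \<Rightarrow> nat \<Rightarrow> nat
     \<Rightarrow> (nat \<Rightarrow> int \<Rightarrow> complex) \<Rightarrow> (nat \<Rightarrow> complex) \<Rightarrow> nat \<Rightarrow> real \<times> real \<times> real \<Rightarrow> complex" where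
  "g_fun D Lf Lh h d u \<rho> =
     (\<Sum>p<Lh. \<Sum>q\<in>{-int p..int p}. \<Sum>q'\<in>{-int p..int p}. g_coef Lf h d u p q q' * D p q q' \<rho>)"

text \<open>Filter coefficients: zeta u p q k = (zeta(.;u))^p_{q,k}.\<close>
definition nu_fun :: "(nat \<Rightarrow> int \<Rightarrow> int \<Rightarrow> real \<times> real \<times> real \<Rightarrow> complex) \<Rightarrow> nat \<Rightarrow> nat
     \<Rightarrow> (nat \<Rightarrow> int \<Rightarrow> complex) \<Rightarrow> (nat \<Rightarrow> nat \<Rightarrow> int \<Rightarrow> int \<Rightarrow> complex) \<Rightarrow> (nat \<Rightarrow> complex)
     \<Rightarrow> nat \<Rightarrow> real \<times> real \<times> real \<Rightarrow> complex" where
  "nu_fun D Lf Lh h \<zeta> f u \<rho> =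
     (\<Sum>p<Lh. \<Sum>q\<in>{-int p..int p}. \<Sum>q'\<in>{-int p..int p}. \<Sum>k\<in>{-int p..int p}.
        g_coef Lf h f u p k q' * \<zeta> u p q k * D p q q' \<rho>)"

definition Ng :: "nat \<Rightarrow> nat \<Rightarrow> nat" where
  "Ng Lf Lh = (Lf + Lh - 1)\<^sup>2 - 1"

text \<open>Mean square error epsilon, with N_g = L_g^2 - 1, L_g = L_f + L_h - 1.\<close>
definition mse :: "'w measure \<Rightarrow> (nat \<Rightarrow> int \<Rightarrow> int \<Rightarrow> real \<times> real \<times> real \<Rightarrow> complex) \<Rightarrow> nat \<Rightarrow> nat
     \<Rightarrow> (nat \<Rightarrow> int \<Rightarrow> complex) \<Rightarrow> ('w \<Rightarrow> nat \<Rightarrow> complex) \<Rightarrow> ('w \<Rightarrow> nat \<Rightarrow> complex)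
     \<Rightarrow> (nat \<Rightarrow> nat \<Rightarrow> int \<Rightarrow> int \<Rightarrow> complex) \<Rightarrow> real" where
  "mse M D Lf Lh h s z \<zeta> =
     (LINT \<omega>|M. (\<Sum>u\<le>Ng Lf Lh.
        (so3_norm (\<lambda>\<rho>. nu_fun D Lf Lh h \<zeta> (\<lambda>n. s \<omega> n + z \<omega> n) u \<rho> - g_fun D Lf Lh h (s \<omega>) u \<rho>))\<^sup>2))"

definition cov :: "'w measure \<Rightarrow> ('w \<Rightarrow> nat \<Rightarrow> complex) \<Rightarrow> nat \<Rightarrow> nat \<Rightarrow> complex" where
  "cov M x n n' = (LINT \<omega>|M. x \<omega> n * cnj (x \<omega> n'))"

definition matA :: "'w measure \<Rightarrow> nat \<Rightarrow> ('w \<Rightarrow> nat \<Rightarrow> complex) \<Rightarrow> ('w \<Rightarrow> nat \<Rightarrow> complex)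
     \<Rightarrow> nat \<Rightarrow> nat \<Rightarrow> int \<Rightarrow> int \<Rightarrow> complex" where
  "matA M Lf s z p u k' k =
     (\<Sum>n\<le>Lf\<^sup>2 - 1. \<Sum>n'\<le>Lf\<^sup>2 - 1.
        triple n p k u * cnj (triple n' p k' u) * (cov M s n n' + cov M z n n'))"

definition vecb :: "'w measure \<Rightarrow> nat \<Rightarrow> ('w \<Rightarrow> nat \<Rightarrow> complex)
     \<Rightarrow> nat \<Rightarrow> int \<Rightarrow> nat \<Rightarrow> int \<Rightarrow> complex" where
  "vecb M Lf s p q u k' =
     (\<Sum>n\<le>Lf\<^sup>2 - 1. \<Sum>n'\<le>Lf\<^sup>2 - 1. triple n p q u * cnj (triple n' p k' u) * cov M s n n')"

definition normal_eq :: "'w measure \<Rightarrow> nat \<Rightarrow> ('w \<Rightarrow> nat \<Rightarrow> complex) \<Rightarrow> ('w \<Rightarrow> nat \<Rightarrow> complex)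
     \<Rightarrow> (nat \<Rightarrow> nat \<Rightarrow> int \<Rightarrow> int \<Rightarrow> complex) \<Rightarrow> nat \<Rightarrow> int \<Rightarrow> nat \<Rightarrow> bool" where
  "normal_eq M Lf s z \<zeta> p q u \<longleftrightarrow>
     (\<forall>k'\<in>{-int p..int p}. (\<Sum>k\<in>{-int p..int p}. matA M Lf s z p u k' k * \<zeta> u p q k) = vecb M Lf s p q u k')"

end

theory Submission
  imports Defs
begin


lemma SO3_compact: "compact SO3_box"
  unfolding SO3_box_def by (intro compact_Times compact_Icc)

lemma so3_integrable:
  assumes "continuous_on SO3_box f" "continuous_on SO3_box g"
  shows "integrable lborel (\<lambda>\<rho>. indicator SO3_box \<rho> *\<^sub>R
           (complex_of_real (sin (fst (snd \<rho>))) * f \<rho> * cnj (g \<rho>)))"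
  by (intro borel_integrable_compact SO3_compact continuous_intros assms)

lemma inner_sum:
  assumes "finite A" "finite B"
    and "\<And>i. i \<in> A \<Longrightarrow> continuous_on SO3_box (f i)"
    and "\<And>j. j \<in> B \<Longrightarrow> continuous_on SO3_box (g j)"
  shows "so3_inner (\<lambda>\<rho>. \<Sum>i\<in>A. a i * f i \<rho>) (\<lambda>\<rho>. \<Sum>j\<in>B. b j * g j \<rho>)
       = (\<Sum>i\<in>A. \<Sum>j\<in>B. a i * cnj (b j) * so3_inner (f i) (g j))"
proof -
  let ?F = "\<lambda>i j \<rho>. indicator SO3_box \<rho> *\<^sub>R
           (complex_of_real (sin (fst (snd \<rho>))) * f i \<rho> * cnj (g j \<rho>))"
  have pw: "indicator SO3_box \<rho> *\<^sub>R (complex_of_real (sin (fst (snd \<rho>))) * (\<Sum>i\<in>A. a i * f i \<rho>)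
          * cnj (\<Sum>j\<in>B. b j * g j \<rho>)) = (\<Sum>i\<in>A. \<Sum>j\<in>B. a i * cnj (b j) * ?F i j \<rho>)" for \<rho>
    by (simp add: sum_distrib_left sum_distrib_right cnj_sum scaleR_sum_right algebra_simps)
  have "so3_inner (\<lambda>\<rho>. \<Sum>i\<in>A. a i * f i \<rho>) (\<lambda>\<rho>. \<Sum>j\<in>B. b j * g j \<rho>)
      = integral\<^sup>L lborel (\<lambda>\<rho>. \<Sum>i\<in>A. \<Sum>j\<in>B. a i * cnj (b j) * ?F i j \<rho>)"
    unfolding so3_inner_def set_lebesgue_integral_def pw ..
  also have "\<dots> = (\<Sum>i\<in>A. \<Sum>j\<in>B. a i * cnj (b j) * integral\<^sup>L lborel (?F i j))"
  proof -
    have I: "integrable lborel (?F i j)" if "i \<in> A" "j \<in> B" for i j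
      using assms that by (intro so3_integrable) auto
    have "integral\<^sup>L lborel (\<lambda>\<rho>. \<Sum>i\<in>A. \<Sum>j\<in>B. a i * cnj (b j) * ?F i j \<rho>)
        = (\<Sum>i\<in>A. integral\<^sup>L lborel (\<lambda>\<rho>. \<Sum>j\<in>B. a i * cnj (b j) * ?F i j \<rho>))"
      by (rule Bochner_Integration.integral_sum[where f="\<lambda>i \<rho>. \<Sum>j\<in>B. a i * cnj (b j) * ?F i j \<rho>"]) (intro Bochner_Integration.integrable_sum integrable_mult_right I; simp)
    also have "\<dots> = (\<Sum>i\<in>A. \<Sum>j\<in>B. integral\<^sup>L lborel (\<lambda>\<rho>. a i * cnj (b j) * ?F i j \<rho>))"
      by (intro sum.cong refl Bochner_Integration.integral_sum[where f="\<lambda>j \<rho>. a i * cnj (b j) * ?F i j \<rho>" for i]) (intro Bochner_Integration.integrable_sum integrable_mult_right I; simp)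
    also have "\<dots> = (\<Sum>i\<in>A. \<Sum>j\<in>B. a i * cnj (b j) * integral\<^sup>L lborel (?F i j))"
      by (simp only: integral_mult_right_zero)
    finally show ?thesis .
  qed
  also have "\<dots> = (\<Sum>i\<in>A. \<Sum>j\<in>B. a i * cnj (b j) * so3_inner (f i) (g j))"
    unfolding so3_inner_def set_lebesgue_integral_def ..
  finally show ?thesis .
qed

definition K3 :: "nat \<Rightarrow> (nat \<times> int \<times> int) set" where
  "K3 Lh = (SIGMA p:{..<Lh}. {-int p..int p} \<times> {-int p..int p})"

lemma finite_K3: "finite (K3 Lh)"
  unfolding K3_def by (intro finite_SigmaI finite_cartesian_product) auto

lemma flat3:
  "(\<Sum>p<Lh. \<Sum>q\<in>{-int p..int p}. \<Sum>q'\<in>{-int p..int p}. F p q q')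
   = (\<Sum>x\<in>K3 Lh. F (fst x) (fst (snd x)) (snd (snd x)))"
proof -
  have "(\<Sum>q\<in>{-int p..int p}. \<Sum>q'\<in>{-int p..int p}. F p q q')
      = (\<Sum>z\<in>{-int p..int p} \<times> {-int p..int p}. F p (fst z) (snd z))" for p
    by (simp add: sum.cartesian_product split_beta)
  hence "(\<Sum>p<Lh. \<Sum>q\<in>{-int p..int p}. \<Sum>q'\<in>{-int p..int p}. F p q q')
      = (\<Sum>p<Lh. \<Sum>z\<in>{-int p..int p} \<times> {-int p..int p}. F p (fst z) (snd z))" by simp
  also have "\<dots> = (\<Sum>x\<in>K3 Lh. F (fst x) (fst (snd x)) (snd (snd x)))"
    unfolding K3_def by (subst sum.Sigma) (auto simp: split_beta)
  finally show ?thesis .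
qed

lemma norm_expansion:
  fixes D :: "nat \<Rightarrow> int \<Rightarrow> int \<Rightarrow> real \<times> real \<times> real \<Rightarrow> complex"
  assumes D_cont: "\<And>l m m'. continuous_on SO3_box (D l m m')"
    and D_orth: "\<And>l m m' l' k k'. \<bar>m\<bar> \<le> int l \<Longrightarrow> \<bar>m'\<bar> \<le> int l \<Longrightarrow> \<bar>k\<bar> \<le> int l' \<Longrightarrow> \<bar>k'\<bar> \<le> int l' \<Longrightarrow>
        so3_inner (D l m m') (D l' k k') =
          (if l = l' \<and> m = k \<and> m' = k' then complex_of_real (8 * pi\<^sup>2 / (2 * real l + 1)) else 0)"
  shows "so3_inner (\<lambda>\<rho>. \<Sum>p<Lh. \<Sum>q\<in>{-int p..int p}. \<Sum>q'\<in>{-int p..int p}. c p q q' * D p q q' \<rho>)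
                   (\<lambda>\<rho>. \<Sum>p<Lh. \<Sum>q\<in>{-int p..int p}. \<Sum>q'\<in>{-int p..int p}. c p q q' * D p q q' \<rho>)
       = complex_of_real (\<Sum>p<Lh. \<Sum>q\<in>{-int p..int p}. \<Sum>q'\<in>{-int p..int p}.
             8 * pi\<^sup>2 / (2 * real p + 1) * (cmod (c p q q'))\<^sup>2)"
proof -
  define cc where "cc x = c (fst x) (fst (snd x)) (snd (snd x))" for x
  define Dx where "Dx x = D (fst x) (fst (snd x)) (snd (snd x))" for x
  define w where "w x = complex_of_real (8 * pi\<^sup>2 / (2 * real (fst x) + 1))" for x :: "nat \<times> int \<times> int"
  have G: "(\<lambda>\<rho>. \<Sum>p<Lh. \<Sum>q\<in>{-int p..int p}. \<Sum>q'\<in>{-int p..int p}. c p q q' * D p q q' \<rho>)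
         = (\<lambda>\<rho>. \<Sum>x\<in>K3 Lh. cc x * Dx x \<rho>)"
    by (rule ext, subst flat3) (simp add: cc_def Dx_def)
  have orth: "so3_inner (Dx x) (Dx y) = (if x = y then w x else 0)" if "x \<in> K3 Lh" "y \<in> K3 Lh" for x y
  proof -
    obtain p q q' where x: "x = (p,q,q')" by (cases x) auto
    obtain p' k k' where y: "y = (p',k,k')" by (cases y) auto
    show ?thesis using that unfolding x y Dx_def w_def K3_def
      by (subst D_orth) auto
  qed
  have "so3_inner (\<lambda>\<rho>. \<Sum>x\<in>K3 Lh. cc x * Dx x \<rho>) (\<lambda>\<rho>. \<Sum>x\<in>K3 Lh. cc x * Dx x \<rho>)
      = (\<Sum>x\<in>K3 Lh. \<Sum>y\<in>K3 Lh. cc x * cnj (cc y) * so3_inner (Dx x) (Dx y))"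
    by (rule inner_sum) (auto simp: finite_K3 Dx_def D_cont)
  also have "\<dots> = (\<Sum>x\<in>K3 Lh. \<Sum>y\<in>K3 Lh. if x = y then cc x * cnj (cc x) * w x else 0)"
    by (intro sum.cong refl) (simp add: orth)
  also have "\<dots> = (\<Sum>x\<in>K3 Lh. cc x * cnj (cc x) * w x)"
    by (simp add: finite_K3 sum.delta)
  also have "\<dots> = complex_of_real (\<Sum>x\<in>K3 Lh. 8 * pi\<^sup>2 / (2 * real (fst x) + 1) * (cmod (cc x))\<^sup>2)"
    by (simp add: w_def complex_norm_square[symmetric] mult.commute)
  also have "\<dots> = complex_of_real (\<Sum>p<Lh. \<Sum>q\<in>{-int p..int p}. \<Sum>q'\<in>{-int p..int p}.
             8 * pi\<^sup>2 / (2 * real p + 1) * (cmod (c p q q'))\<^sup>2)"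
    by (subst flat3) (simp add: cc_def)
  finally show ?thesis by (simp only: G)
qed

definition Xf :: "nat \<Rightarrow> (nat \<Rightarrow> complex) \<Rightarrow> nat \<Rightarrow> nat \<Rightarrow> int \<Rightarrow> complex" where
  "Xf Lf d u p k = (\<Sum>n\<le>Lf\<^sup>2 - 1. triple n p k u * d n)"

definition Hs :: "(nat \<Rightarrow> int \<Rightarrow> complex) \<Rightarrow> nat \<Rightarrow> real" where
  "Hs h p = (\<Sum>q'\<in>{-int p..int p}. (cmod (h p q'))\<^sup>2)"

definition cw :: "(nat \<Rightarrow> int \<Rightarrow> complex) \<Rightarrow> nat \<Rightarrow> real" where
  "cw h p = 8 * pi\<^sup>2 / (2 * real p + 1) * Hs h p"

lemma g_coef_alt: "g_coef Lf h d u p q q' = h p q' * Xf Lf d u p q"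
  unfolding g_coef_def Xf_def by (simp add: sum_distrib_left algebra_simps)

lemma pointwise:
  fixes D :: "nat \<Rightarrow> int \<Rightarrow> int \<Rightarrow> real \<times> real \<times> real \<Rightarrow> complex"
  assumes D_cont: "\<And>l m m'. continuous_on SO3_box (D l m m')"
    and D_orth: "\<And>l m m' l' k k'. \<bar>m\<bar> \<le> int l \<Longrightarrow> \<bar>m'\<bar> \<le> int l \<Longrightarrow> \<bar>k\<bar> \<le> int l' \<Longrightarrow> \<bar>k'\<bar> \<le> int l' \<Longrightarrow>
        so3_inner (D l m m') (D l' k k') =
          (if l = l' \<and> m = k \<and> m' = k' then complex_of_real (8 * pi\<^sup>2 / (2 * real l + 1)) else 0)"
  shows "(so3_norm (\<lambda>\<rho>. nu_fun D Lf Lh h \<zeta> f u \<rho> - g_fun D Lf Lh h s u \<rho>))\<^sup>2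
       = (\<Sum>p<Lh. cw h p * (\<Sum>q\<in>{-int p..int p}.
            (cmod ((\<Sum>k\<in>{-int p..int p}. Xf Lf f u p k * \<zeta> u p q k) - Xf Lf s u p q))\<^sup>2))"
proof -
  define R where "R p q = (\<Sum>k\<in>{-int p..int p}. Xf Lf f u p k * \<zeta> u p q k) - Xf Lf s u p q" for p q
  have diff: "(\<lambda>\<rho>. nu_fun D Lf Lh h \<zeta> f u \<rho> - g_fun D Lf Lh h s u \<rho>)
     = (\<lambda>\<rho>. \<Sum>p<Lh. \<Sum>q\<in>{-int p..int p}. \<Sum>q'\<in>{-int p..int p}. (h p q' * R p q) * D p q q' \<rho>)"
  proof
    fix \<rho>
    have e: "(\<Sum>k\<in>{-int p..int p}. g_coef Lf h f u p k q' * \<zeta> u p q k * D p q q' \<rho>)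
             - g_coef Lf h s u p q q' * D p q q' \<rho> = (h p q' * R p q) * D p q q' \<rho>" for p q q'
      by (simp add: g_coef_alt R_def sum_distrib_left sum_distrib_right algebra_simps)
    show "nu_fun D Lf Lh h \<zeta> f u \<rho> - g_fun D Lf Lh h s u \<rho>
       = (\<Sum>p<Lh. \<Sum>q\<in>{-int p..int p}. \<Sum>q'\<in>{-int p..int p}. (h p q' * R p q) * D p q q' \<rho>)"
      unfolding nu_fun_def g_fun_def e[symmetric] by (simp add: sum_subtractf)
  qed
  have re: "Re (so3_inner (\<lambda>\<rho>. nu_fun D Lf Lh h \<zeta> f u \<rho> - g_fun D Lf Lh h s u \<rho>)
                         (\<lambda>\<rho>. nu_fun D Lf Lh h \<zeta> f u \<rho> - g_fun D Lf Lh h s u \<rho>))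
     = (\<Sum>p<Lh. \<Sum>q\<in>{-int p..int p}. \<Sum>q'\<in>{-int p..int p}.
             8 * pi\<^sup>2 / (2 * real p + 1) * (cmod (h p q' * R p q))\<^sup>2)"
    unfolding diff by (subst norm_expansion[OF D_cont D_orth]) auto
  also have "\<dots> = (\<Sum>p<Lh. cw h p * (\<Sum>q\<in>{-int p..int p}. (cmod (R p q))\<^sup>2))"
    by (intro sum.cong refl)
       (simp add: cw_def Hs_def norm_mult power_mult_distrib sum_distrib_left sum_distrib_right mult_ac sum_divide_distrib, rule sum.swap)
  finally have re': "Re (so3_inner (\<lambda>\<rho>. nu_fun D Lf Lh h \<zeta> f u \<rho> - g_fun D Lf Lh h s u \<rho>)
                         (\<lambda>\<rho>. nu_fun D Lf Lh h \<zeta> f u \<rho> - g_fun D Lf Lh h s u \<rho>))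
     = (\<Sum>p<Lh. cw h p * (\<Sum>q\<in>{-int p..int p}. (cmod (R p q))\<^sup>2))" .
  have "0 \<le> (\<Sum>p<Lh. cw h p * (\<Sum>q\<in>{-int p..int p}. (cmod (R p q))\<^sup>2))"
    by (intro sum_nonneg mult_nonneg_nonneg) (auto simp: cw_def Hs_def intro!: sum_nonneg divide_nonneg_pos mult_nonneg_nonneg)
  then show ?thesis unfolding so3_norm_def re' R_def by simp
qed



definition L2 :: "'w measure \<Rightarrow> ('w \<Rightarrow> complex) \<Rightarrow> bool" where
  "L2 M g \<longleftrightarrow> g \<in> borel_measurable M \<and> integrable M (\<lambda>\<omega>. (cmod (g \<omega>))\<^sup>2)"

lemma cmod_add_sq: "(cmod (a + b))\<^sup>2 = (cmod a)\<^sup>2 + 2 * Re (a * cnj b) + (cmod b)\<^sup>2"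
  unfolding cmod_power2 by (simp add: power2_eq_square algebra_simps)

lemma L2_zero: "L2 M (\<lambda>_. 0)"
  unfolding L2_def by simp

lemma L2_add:
  assumes "L2 M g" "L2 M g'" shows "L2 M (\<lambda>\<omega>. g \<omega> + g' \<omega>)"
proof -
  have m: "g \<in> borel_measurable M" "g' \<in> borel_measurable M" using assms by (auto simp: L2_def)
  have i: "integrable M (\<lambda>\<omega>. 2 * (cmod (g \<omega>))\<^sup>2 + 2 * (cmod (g' \<omega>))\<^sup>2)"
    using assms by (auto simp: L2_def)
  have b: "norm ((cmod (g \<omega> + g' \<omega>))\<^sup>2) \<le> norm (2 * (cmod (g \<omega>))\<^sup>2 + 2 * (cmod (g' \<omega>))\<^sup>2)" for \<omega>
  proof -
    have "cmod (g \<omega> + g' \<omega>) \<le> cmod (g \<omega>) + cmod (g' \<omega>)" by (rule norm_triangle_ineq)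
    hence "(cmod (g \<omega> + g' \<omega>))\<^sup>2 \<le> (cmod (g \<omega>) + cmod (g' \<omega>))\<^sup>2"
      by (intro power_mono) auto
    also have "\<dots> \<le> 2 * (cmod (g \<omega>))\<^sup>2 + 2 * (cmod (g' \<omega>))\<^sup>2"
      using sum_squares_bound[of "cmod (g \<omega>)" "cmod (g' \<omega>)"] by (simp add: power2_sum)
    finally show ?thesis by simp
  qed
  have "integrable M (\<lambda>\<omega>. (cmod (g \<omega> + g' \<omega>))\<^sup>2)"
    by (rule Bochner_Integration.integrable_bound[OF i]) (use m b in auto)
  thus ?thesis using m unfolding L2_def by auto
qed

lemma L2_mult:
  assumes "L2 M g" shows "L2 M (\<lambda>\<omega>. c * g \<omega>)"
  using assms unfolding L2_def by (auto simp: norm_mult power_mult_distrib)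

lemma L2_mult2:
  assumes "L2 M g" shows "L2 M (\<lambda>\<omega>. g \<omega> * c)"
  using L2_mult[OF assms, of c] by (simp add: mult.commute)

lemma L2_sum:
  assumes "\<And>i. i \<in> A \<Longrightarrow> L2 M (g i)" shows "L2 M (\<lambda>\<omega>. \<Sum>i\<in>A. g i \<omega>)"
  using assms
proof (induction A rule: infinite_finite_induct)
  case (infinite A) thus ?case by (simp add: L2_zero)
next
  case empty thus ?case by (simp add: L2_zero)
next
  case (insert x F) thus ?case by (simp add: L2_add)
qed

lemma L2_diff:
  assumes "L2 M g" "L2 M g'" shows "L2 M (\<lambda>\<omega>. g \<omega> - g' \<omega>)"
  using L2_add[OF assms(1) L2_mult[OF assms(2), of "-1"]] by simp

lemma L2_prod:
  assumes "L2 M g" "L2 M g'" shows "integrable M (\<lambda>\<omega>. g \<omega> * cnj (g' \<omega>))"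
proof -
  have m: "g \<in> borel_measurable M" "g' \<in> borel_measurable M" using assms by (auto simp: L2_def)
  have i: "integrable M (\<lambda>\<omega>. (cmod (g \<omega>))\<^sup>2 + (cmod (g' \<omega>))\<^sup>2)"
    using assms by (auto simp: L2_def)
  have b: "norm (g \<omega> * cnj (g' \<omega>)) \<le> norm ((cmod (g \<omega>))\<^sup>2 + (cmod (g' \<omega>))\<^sup>2)" for \<omega>
  proof -
    have "norm (g \<omega> * cnj (g' \<omega>)) = cmod (g \<omega>) * cmod (g' \<omega>)" by (simp add: norm_mult)
    also have "\<dots> \<le> (cmod (g \<omega>))\<^sup>2 + (cmod (g' \<omega>))\<^sup>2"
      using sum_squares_bound[of "cmod (g \<omega>)" "cmod (g' \<omega>)"]
        zero_le_power2[of "cmod (g \<omega>)"] zero_le_power2[of "cmod (g' \<omega>)"]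
        mult_nonneg_nonneg[OF norm_ge_zero[of "g \<omega>"] norm_ge_zero[of "g' \<omega>"]] by linarith
    finally show ?thesis by simp
  qed
  have mc: "(\<lambda>\<omega>. cnj (g' \<omega>)) \<in> borel_measurable M"
    by (rule borel_measurable_continuous_on[OF _ m(2)]) (intro continuous_intros)
  show ?thesis
    by (rule Bochner_Integration.integrable_bound[OF i]) (use m mc b in auto)
qed

lemma L2_sq: "L2 M g \<Longrightarrow> integrable M (\<lambda>\<omega>. (cmod (g \<omega>))\<^sup>2)"
  unfolding L2_def by auto

lemma E_bilin:
  assumes "finite A" "finite B" "\<And>i. i \<in> A \<Longrightarrow> L2 M (g i)" "\<And>j. j \<in> B \<Longrightarrow> L2 M (g' j)"
  shows "(LINT \<omega>|M. (\<Sum>i\<in>A. a i * g i \<omega>) * cnj (\<Sum>j\<in>B. b j * g' j \<omega>))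
       = (\<Sum>i\<in>A. \<Sum>j\<in>B. a i * cnj (b j) * (LINT \<omega>|M. g i \<omega> * cnj (g' j \<omega>)))"
proof -
  have I: "integrable M (\<lambda>\<omega>. g i \<omega> * cnj (g' j \<omega>))" if "i \<in> A" "j \<in> B" for i j
    using assms that by (intro L2_prod) auto
  have pw: "(\<Sum>i\<in>A. a i * g i \<omega>) * cnj (\<Sum>j\<in>B. b j * g' j \<omega>)
     = (\<Sum>i\<in>A. \<Sum>j\<in>B. a i * cnj (b j) * (g i \<omega> * cnj (g' j \<omega>)))" for \<omega>
    by (simp add: sum_product cnj_sum mult.assoc mult.left_commute)
  have "(LINT \<omega>|M. (\<Sum>i\<in>A. a i * g i \<omega>) * cnj (\<Sum>j\<in>B. b j * g' j \<omega>))
      = (LINT \<omega>|M. (\<Sum>i\<in>A. \<Sum>j\<in>B. a i * cnj (b j) * (g i \<omega> * cnj (g' j \<omega>))))"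
    by (simp only: pw)
  also have "\<dots> = (\<Sum>i\<in>A. LINT \<omega>|M. (\<Sum>j\<in>B. a i * cnj (b j) * (g i \<omega> * cnj (g' j \<omega>))))"
    by (rule Bochner_Integration.integral_sum[where f="\<lambda>i \<omega>. \<Sum>j\<in>B. a i * cnj (b j) * (g i \<omega> * cnj (g' j \<omega>))"])
       (intro Bochner_Integration.integrable_sum integrable_mult_right I; simp)
  also have "\<dots> = (\<Sum>i\<in>A. \<Sum>j\<in>B. LINT \<omega>|M. a i * cnj (b j) * (g i \<omega> * cnj (g' j \<omega>)))"
    by (intro sum.cong refl Bochner_Integration.integral_sum[where f="\<lambda>j \<omega>. a i * cnj (b j) * (g i \<omega> * cnj (g' j \<omega>))" for i])
       (intro integrable_mult_right I; simp)
  also have "\<dots> = (\<Sum>i\<in>A. \<Sum>j\<in>B. a i * cnj (b j) * (LINT \<omega>|M. g i \<omega> * cnj (g' j \<omega>)))"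
    by (simp only: integral_mult_right_zero)
  finally show ?thesis .
qed

lemma block_G:
  fixes X :: "int \<Rightarrow> 'w \<Rightarrow> complex"
  assumes finK: "finite K" and LX: "\<And>k. k \<in> K \<Longrightarrow> L2 M (X k)" and LY: "L2 M Y" and k': "L2 M Z"
  shows "(LINT \<omega>|M. ((\<Sum>k\<in>K. X k \<omega> * \<phi> k) - Y \<omega>) * cnj (Z \<omega>))
       = (\<Sum>k\<in>K. (LINT \<omega>|M. X k \<omega> * cnj (Z \<omega>)) * \<phi> k) - (LINT \<omega>|M. Y \<omega> * cnj (Z \<omega>))"
proof -
  have I: "integrable M (\<lambda>\<omega>. X k \<omega> * cnj (Z \<omega>))" if "k \<in> K" for k
    using LX[OF that] k' by (rule L2_prod)
  have pw: "((\<Sum>k\<in>K. X k \<omega> * \<phi> k) - Y \<omega>) * cnj (Z \<omega>)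
      = (\<Sum>k\<in>K. (X k \<omega> * cnj (Z \<omega>)) * \<phi> k) - Y \<omega> * cnj (Z \<omega>)" for \<omega>
    unfolding left_diff_distrib sum_distrib_right by (simp add: mult_ac)
  have "(LINT \<omega>|M. ((\<Sum>k\<in>K. X k \<omega> * \<phi> k) - Y \<omega>) * cnj (Z \<omega>))
      = (LINT \<omega>|M. (\<Sum>k\<in>K. (X k \<omega> * cnj (Z \<omega>)) * \<phi> k)) - (LINT \<omega>|M. Y \<omega> * cnj (Z \<omega>))"
    unfolding pw
    by (rule Bochner_Integration.integral_diff)
       (intro Bochner_Integration.integrable_sum integrable_mult_left I L2_prod LY k'; simp)+
  also have "(LINT \<omega>|M. (\<Sum>k\<in>K. (X k \<omega> * cnj (Z \<omega>)) * \<phi> k)) = (\<Sum>k\<in>K. LINT \<omega>|M. (X k \<omega> * cnj (Z \<omega>)) * \<phi> k)"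
    by (rule Bochner_Integration.integral_sum[where f="\<lambda>k \<omega>. (X k \<omega> * cnj (Z \<omega>)) * \<phi> k"])
       (intro integrable_mult_left I; simp)
  finally show ?thesis by (simp only: integral_mult_left_zero)
qed

lemma L2_lin:
  assumes "finite K" "\<And>k. k \<in> K \<Longrightarrow> L2 M (X k)"
  shows "L2 M (\<lambda>\<omega>. \<Sum>k\<in>K. X k \<omega> * c k)"
  by (intro L2_sum L2_mult2 assms)

lemma block_var:
  fixes X :: "int \<Rightarrow> 'w \<Rightarrow> complex"
  assumes finK: "finite K" and LX: "\<And>k. k \<in> K \<Longrightarrow> L2 M (X k)" and LY: "L2 M Y"
  shows "(LINT \<omega>|M. (cmod ((\<Sum>k\<in>K. X k \<omega> * \<psi> k) - Y \<omega>))\<^sup>2)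
     = (LINT \<omega>|M. (cmod ((\<Sum>k\<in>K. X k \<omega> * \<phi> k) - Y \<omega>))\<^sup>2)
       + 2 * Re (\<Sum>k\<in>K. cnj (\<psi> k - \<phi> k) *
            (LINT \<omega>|M. ((\<Sum>k\<in>K. X k \<omega> * \<phi> k) - Y \<omega>) * cnj (X k \<omega>)))
       + (LINT \<omega>|M. (cmod (\<Sum>k\<in>K. X k \<omega> * (\<psi> k - \<phi> k)))\<^sup>2)"
proof -
  define e where "e \<omega> = (\<Sum>k\<in>K. X k \<omega> * \<phi> k) - Y \<omega>" for \<omega>
  define W where "W \<omega> = (\<Sum>k\<in>K. X k \<omega> * (\<psi> k - \<phi> k))" for \<omega>
  have Le: "L2 M e" unfolding e_def by (intro L2_diff L2_lin finK LX LY)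
  have LW: "L2 M W" unfolding W_def by (intro L2_lin finK LX)
  have pw: "(cmod ((\<Sum>k\<in>K. X k \<omega> * \<psi> k) - Y \<omega>))\<^sup>2
      = (cmod (e \<omega>))\<^sup>2 + 2 * Re (e \<omega> * cnj (W \<omega>)) + (cmod (W \<omega>))\<^sup>2" for \<omega>
  proof -
    have "(\<Sum>k\<in>K. X k \<omega> * \<psi> k) - Y \<omega> = e \<omega> + W \<omega>"
      unfolding e_def W_def by (simp add: algebra_simps sum_subtractf)
    thus ?thesis by (simp add: cmod_add_sq)
  qed
  have IeW: "integrable M (\<lambda>\<omega>. e \<omega> * cnj (W \<omega>))" by (rule L2_prod[OF Le LW])
  have "(LINT \<omega>|M. (cmod ((\<Sum>k\<in>K. X k \<omega> * \<psi> k) - Y \<omega>))\<^sup>2)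
      = (LINT \<omega>|M. (cmod (e \<omega>))\<^sup>2 + 2 * Re (e \<omega> * cnj (W \<omega>))) + (LINT \<omega>|M. (cmod (W \<omega>))\<^sup>2)"
    unfolding pw
    by (rule Bochner_Integration.integral_add)
       (intro Bochner_Integration.integrable_add integrable_mult_right integrable_Re L2_sq Le LW IeW)+
  also have "(LINT \<omega>|M. (cmod (e \<omega>))\<^sup>2 + 2 * Re (e \<omega> * cnj (W \<omega>)))
      = (LINT \<omega>|M. (cmod (e \<omega>))\<^sup>2) + (LINT \<omega>|M. 2 * Re (e \<omega> * cnj (W \<omega>)))"
    by (rule Bochner_Integration.integral_add)
       (intro integrable_mult_right integrable_Re L2_sq Le LW IeW)+
  also have "(LINT \<omega>|M. 2 * Re (e \<omega> * cnj (W \<omega>))) = 2 * Re (LINT \<omega>|M. e \<omega> * cnj (W \<omega>))"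
    by (simp only: integral_mult_right_zero integral_Re[OF IeW])
  also have "(LINT \<omega>|M. e \<omega> * cnj (W \<omega>)) = (\<Sum>k\<in>K. cnj (\<psi> k - \<phi> k) * (LINT \<omega>|M. e \<omega> * cnj (X k \<omega>)))"
  proof -
    have I: "integrable M (\<lambda>\<omega>. e \<omega> * cnj (X k \<omega>))" if "k \<in> K" for k
      by (rule L2_prod[OF Le LX[OF that]])
    have "(\<lambda>\<omega>. e \<omega> * cnj (W \<omega>)) = (\<lambda>\<omega>. \<Sum>k\<in>K. cnj (\<psi> k - \<phi> k) * (e \<omega> * cnj (X k \<omega>)))"
      unfolding W_def by (simp add: cnj_sum sum_distrib_left algebra_simps)
    hence "(LINT \<omega>|M. e \<omega> * cnj (W \<omega>)) = (\<Sum>k\<in>K. LINT \<omega>|M. cnj (\<psi> k - \<phi> k) * (e \<omega> * cnj (X k \<omega>)))"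
      by (simp only:) (rule Bochner_Integration.integral_sum[where f="\<lambda>k \<omega>. cnj (\<psi> k - \<phi> k) * (e \<omega> * cnj (X k \<omega>))"],
          intro integrable_mult_right I, simp)
    thus ?thesis by (simp only: integral_mult_right_zero)
  qed
  finally show ?thesis unfolding e_def W_def .
qed

lemma block_suff:
  fixes X :: "int \<Rightarrow> 'w \<Rightarrow> complex"
  assumes finK: "finite K" and LX: "\<And>k. k \<in> K \<Longrightarrow> L2 M (X k)" and LY: "L2 M Y"
    and ne: "\<forall>k'\<in>K. (\<Sum>k\<in>K. (LINT \<omega>|M. X k \<omega> * cnj (X k' \<omega>)) * \<phi> k) = (LINT \<omega>|M. Y \<omega> * cnj (X k' \<omega>))"
  shows "(LINT \<omega>|M. (cmod ((\<Sum>k\<in>K. X k \<omega> * \<phi> k) - Y \<omega>))\<^sup>2)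
      \<le> (LINT \<omega>|M. (cmod ((\<Sum>k\<in>K. X k \<omega> * \<psi> k) - Y \<omega>))\<^sup>2)"
proof -
  have G0: "(LINT \<omega>|M. ((\<Sum>k\<in>K. X k \<omega> * \<phi> k) - Y \<omega>) * cnj (X k' \<omega>)) = 0" if "k' \<in> K" for k'
    using ne that by (subst block_G[OF finK LX LY LX[OF that]]) auto
  show ?thesis
    by (subst block_var[OF finK LX LY, of _ \<psi> \<phi>]) (auto simp: G0 intro!: integral_nonneg_AE)
qed

lemma block_nec:
  fixes X :: "int \<Rightarrow> 'w \<Rightarrow> complex"
  assumes finK: "finite K" and LX: "\<And>k. k \<in> K \<Longrightarrow> L2 M (X k)" and LY: "L2 M Y"
    and ne: "\<not> (\<forall>k'\<in>K. (\<Sum>k\<in>K. (LINT \<omega>|M. X k \<omega> * cnj (X k' \<omega>)) * \<phi> k) = (LINT \<omega>|M. Y \<omega> * cnj (X k' \<omega>)))"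
  shows "\<exists>\<psi>. (LINT \<omega>|M. (cmod ((\<Sum>k\<in>K. X k \<omega> * \<psi> k) - Y \<omega>))\<^sup>2)
      < (LINT \<omega>|M. (cmod ((\<Sum>k\<in>K. X k \<omega> * \<phi> k) - Y \<omega>))\<^sup>2)"
proof -
  define G where "G k' = (LINT \<omega>|M. ((\<Sum>k\<in>K. X k \<omega> * \<phi> k) - Y \<omega>) * cnj (X k' \<omega>))" for k'
  obtain k0 where k0: "k0 \<in> K"
    "(\<Sum>k\<in>K. (LINT \<omega>|M. X k \<omega> * cnj (X k0 \<omega>)) * \<phi> k) \<noteq> (LINT \<omega>|M. Y \<omega> * cnj (X k0 \<omega>))"
    using ne by auto
  have "G k0 \<noteq> 0"
    unfolding G_def using k0 by (subst block_G[OF finK LX LY LX[OF k0(1)]]) auto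
  note k0 = k0(1) this
  define a where "a = G k0"
  define B where "B = (LINT \<omega>|M. (cmod (X k0 \<omega>))\<^sup>2)"
  have B0: "0 \<le> B" unfolding B_def by (intro integral_nonneg_AE) auto
  define t where "t = - 1 / (B + 1)"
  define \<psi> where "\<psi> k = \<phi> k + (if k = k0 then complex_of_real t * a else 0)" for k
  have d: "\<psi> k - \<phi> k = (if k = k0 then complex_of_real t * a else 0)" for k
    unfolding \<psi>_def by simp
  have s1: "(\<Sum>k\<in>K. cnj (\<psi> k - \<phi> k) * G k) = complex_of_real (t * (cmod a)\<^sup>2)"
  proof -
    have "(\<Sum>k\<in>K. cnj (\<psi> k - \<phi> k) * G k) = (\<Sum>k\<in>K. if k = k0 then cnj (complex_of_real t * a) * G k0 else 0)"
      by (intro sum.cong) (auto simp: d)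
    also have "\<dots> = cnj (complex_of_real t * a) * a" using k0(1) finK by (simp add: a_def)
    also have "\<dots> = complex_of_real t * (a * cnj a)" by (simp add: mult_ac)
    also have "\<dots> = complex_of_real (t * (cmod a)\<^sup>2)" by (simp add: complex_norm_square[symmetric])
    finally show ?thesis .
  qed
  have s2: "(LINT \<omega>|M. (cmod (\<Sum>k\<in>K. X k \<omega> * (\<psi> k - \<phi> k)))\<^sup>2) = (t * cmod a)\<^sup>2 * B"
  proof -
    have "(\<lambda>\<omega>. (cmod (\<Sum>k\<in>K. X k \<omega> * (\<psi> k - \<phi> k)))\<^sup>2) = (\<lambda>\<omega>. (t * cmod a)\<^sup>2 * (cmod (X k0 \<omega>))\<^sup>2)"
    proof
      fix \<omega>
      have "(\<Sum>k\<in>K. X k \<omega> * (\<psi> k - \<phi> k)) = (\<Sum>k\<in>K. if k = k0 then X k0 \<omega> * (complex_of_real t * a) else 0)"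
        by (intro sum.cong) (auto simp: d)
      also have "\<dots> = X k0 \<omega> * (complex_of_real t * a)" using k0(1) finK by simp
      finally show "(cmod (\<Sum>k\<in>K. X k \<omega> * (\<psi> k - \<phi> k)))\<^sup>2 = (t * cmod a)\<^sup>2 * (cmod (X k0 \<omega>))\<^sup>2"
        by (simp add: norm_mult power_mult_distrib)
    qed
    thus ?thesis unfolding B_def by simp
  qed
  have apos: "0 < (cmod a)\<^sup>2" using k0(2) unfolding a_def by simp
  have neg: "2 * t + t\<^sup>2 * B < 0"
  proof -
    have "t\<^sup>2 * B = B / (B + 1)\<^sup>2" unfolding t_def using B0 by (simp add: power2_eq_square field_simps)
    also have "\<dots> = (B / (B + 1)) / (B + 1)" by (simp add: power2_eq_square)
    also have "\<dots> \<le> 1 / (B + 1)" using B0 by (intro divide_right_mono) auto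
    finally have "t\<^sup>2 * B \<le> 1 / (B + 1)" .
    moreover have "0 < 1 / (B + 1)" using B0 by simp
    moreover have "t = - (1 / (B + 1))" unfolding t_def by simp
    ultimately show ?thesis by linarith
  qed
  have "(LINT \<omega>|M. (cmod ((\<Sum>k\<in>K. X k \<omega> * \<psi> k) - Y \<omega>))\<^sup>2)
      = (LINT \<omega>|M. (cmod ((\<Sum>k\<in>K. X k \<omega> * \<phi> k) - Y \<omega>))\<^sup>2) + (cmod a)\<^sup>2 * (2 * t + t\<^sup>2 * B)"
  proof -
    define V0 where "V0 = (LINT \<omega>|M. (cmod ((\<Sum>k\<in>K. X k \<omega> * \<phi> k) - Y \<omega>))\<^sup>2)"
    have eq: "(LINT \<omega>|M. (cmod ((\<Sum>k\<in>K. X k \<omega> * \<psi> k) - Y \<omega>))\<^sup>2)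
       = V0 + 2 * Re (\<Sum>k\<in>K. cnj (\<psi> k - \<phi> k) * G k)
         + (LINT \<omega>|M. (cmod (\<Sum>k\<in>K. X k \<omega> * (\<psi> k - \<phi> k)))\<^sup>2)"
      unfolding V0_def G_def by (rule block_var[OF finK LX LY])
    also have "\<dots> = V0 + 2 * (t * (cmod a)\<^sup>2) + (t * cmod a)\<^sup>2 * B"
      by (simp only: s1 s2 Re_complex_of_real)
    also have "\<dots> = V0 + (cmod a)\<^sup>2 * (2 * t + t\<^sup>2 * B)"
      by (simp add: power_mult_distrib algebra_simps)
    finally show ?thesis unfolding V0_def .
  qed
  moreover have "(cmod a)\<^sup>2 * (2 * t + t\<^sup>2 * B) < 0" using apos neg by (simp add: mult_pos_neg)
  ultimately show ?thesis by (intro exI[of _ \<psi>]) linarith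
qed



lemma sum_strict_one:
  fixes f g :: "'a \<Rightarrow> real"
  assumes "finite A" "a \<in> A" "\<And>x. x \<in> A \<Longrightarrow> x \<noteq> a \<Longrightarrow> f x = g x" "f a < g a"
  shows "sum f A < sum g A"
proof -
  have "sum f A = f a + sum f (A - {a})" using assms by (simp add: sum.remove)
  moreover have "sum g A = g a + sum g (A - {a})" using assms by (simp add: sum.remove)
  moreover have "sum f (A - {a}) = sum g (A - {a})" using assms by (intro sum.cong) auto
  ultimately show ?thesis using assms by simp
qed

lemma E_pair:
  assumes "L2 M a" "L2 M b" "L2 M c" "L2 M d"
  shows "(LINT \<omega>|M. (a \<omega> + b \<omega>) * cnj (c \<omega> + d \<omega>))
    = (LINT \<omega>|M. a \<omega> * cnj (c \<omega>)) + (LINT \<omega>|M. a \<omega> * cnj (d \<omega>))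
    + (LINT \<omega>|M. b \<omega> * cnj (c \<omega>)) + (LINT \<omega>|M. b \<omega> * cnj (d \<omega>))"
proof -
  have pw: "(a \<omega> + b \<omega>) * cnj (c \<omega> + d \<omega>) = ((a \<omega> * cnj (c \<omega>) + a \<omega> * cnj (d \<omega>))
      + b \<omega> * cnj (c \<omega>)) + b \<omega> * cnj (d \<omega>)" for \<omega>
    by (simp add: algebra_simps)
  note I = L2_prod[OF assms(1) assms(3)] L2_prod[OF assms(1) assms(4)]
           L2_prod[OF assms(2) assms(3)] L2_prod[OF assms(2) assms(4)]
  show ?thesis unfolding pw
    by (subst Bochner_Integration.integral_add, (intro Bochner_Integration.integrable_add I)+)+ (rule refl)
qed

lemma E_pair1:
  assumes "L2 M a" "L2 M c" "L2 M d"
  shows "(LINT \<omega>|M. a \<omega> * cnj (c \<omega> + d \<omega>))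
    = (LINT \<omega>|M. a \<omega> * cnj (c \<omega>)) + (LINT \<omega>|M. a \<omega> * cnj (d \<omega>))"
proof -
  have pw: "a \<omega> * cnj (c \<omega> + d \<omega>) = a \<omega> * cnj (c \<omega>) + a \<omega> * cnj (d \<omega>)" for \<omega>
    by (simp add: algebra_simps)
  show ?thesis unfolding pw
    by (rule Bochner_Integration.integral_add) (intro L2_prod assms)+
qed

theorem theorem1:
  fixes M :: "'w measure"
    and s z :: "'w \<Rightarrow> nat \<Rightarrow> complex"
    and h :: "nat \<Rightarrow> int \<Rightarrow> complex"
    and D :: "nat \<Rightarrow> int \<Rightarrow> int \<Rightarrow> real \<times> real \<times> real \<Rightarrow> complex"
    and Lf Lh :: nat
  assumes prob: "prob_space M"
    and s_meas: "\<And>n. (\<lambda>\<omega>. s \<omega> n) \<in> borel_measurable M"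
    and z_meas: "\<And>n. (\<lambda>\<omega>. z \<omega> n) \<in> borel_measurable M"
    and s_sq: "\<And>n. integrable M (\<lambda>\<omega>. (cmod (s \<omega> n))\<^sup>2)"
    and z_sq: "\<And>n. integrable M (\<lambda>\<omega>. (cmod (z \<omega> n))\<^sup>2)"
    and s_band: "\<And>\<omega> n. Lf\<^sup>2 \<le> n \<Longrightarrow> s \<omega> n = 0"
    and z_band: "\<And>\<omega> n. Lf\<^sup>2 \<le> n \<Longrightarrow> z \<omega> n = 0"
    and z_mean: "\<And>n. (LINT \<omega>|M. z \<omega> n) = 0"
    and uncorr1: "\<And>n n'. (LINT \<omega>|M. s \<omega> n * cnj (z \<omega> n')) = 0"
    and uncorr2: "\<And>n n'. (LINT \<omega>|M. z \<omega> n * cnj (s \<omega> n')) = 0"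
    and h_band: "\<And>p q. Lh \<le> p \<Longrightarrow> h p q = 0"
    and D_cont: "\<And>l m m'. continuous_on SO3_box (D l m m')"
    and D_orth: "\<And>l m m' l' k k'. \<bar>m\<bar> \<le> int l \<Longrightarrow> \<bar>m'\<bar> \<le> int l \<Longrightarrow> \<bar>k\<bar> \<le> int l' \<Longrightarrow> \<bar>k'\<bar> \<le> int l' \<Longrightarrow>
        so3_inner (D l m m') (D l' k k') =
          (if l = l' \<and> m = k \<and> m' = k' then complex_of_real (8 * pi\<^sup>2 / (2 * real l + 1)) else 0)"
  shows "(\<forall>\<zeta>. (\<forall>p<Lh. \<forall>q\<in>{-int p..int p}. \<forall>u\<le>Ng Lf Lh. normal_eq M Lf s z \<zeta> p q u)
            \<longrightarrow> (\<forall>\<zeta>'. mse M D Lf Lh h s z \<zeta> \<le> mse M D Lf Lh h s z \<zeta>'))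
       \<and> (\<forall>\<zeta>. (\<forall>\<zeta>'. mse M D Lf Lh h s z \<zeta> \<le> mse M D Lf Lh h s z \<zeta>')
            \<longrightarrow> (\<forall>p<Lh. \<forall>q\<in>{-int p..int p}. \<forall>u\<le>Ng Lf Lh.
                   (\<Sum>q'\<in>{-int p..int p}. (cmod (h p q'))\<^sup>2) \<noteq> 0 \<longrightarrow> normal_eq M Lf s z \<zeta> p q u))"
proof -
  define f where "f \<omega> = (\<lambda>n. s \<omega> n + z \<omega> n)" for \<omega>
  have Ls: "L2 M (\<lambda>\<omega>. s \<omega> n)" for n using s_meas s_sq by (simp add: L2_def)
  have Lz: "L2 M (\<lambda>\<omega>. z \<omega> n)" for n using z_meas z_sq by (simp add: L2_def)
  have Lfn: "L2 M (\<lambda>\<omega>. f \<omega> n)" for n unfolding f_def by (intro L2_add Ls Lz)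
  have LX: "L2 M (\<lambda>\<omega>. Xf Lf (f \<omega>) u p k)" for u p k
    unfolding Xf_def by (intro L2_sum L2_mult Lfn)
  have LY: "L2 M (\<lambda>\<omega>. Xf Lf (s \<omega>) u p q)" for u p q
    unfolding Xf_def by (intro L2_sum L2_mult Ls)
  define V where "V u p q \<phi> = (LINT \<omega>|M. (cmod ((\<Sum>k\<in>{-int p..int p}. Xf Lf (f \<omega>) u p k * \<phi> k)
        - Xf Lf (s \<omega>) u p q))\<^sup>2)" for u p q and \<phi> :: "int \<Rightarrow> complex"
  have IV: "integrable M (\<lambda>\<omega>. (cmod ((\<Sum>k\<in>{-int p..int p}. Xf Lf (f \<omega>) u p k * \<phi> k)
        - Xf Lf (s \<omega>) u p q))\<^sup>2)" for u p q \<phi>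
    by (intro L2_sq L2_diff L2_lin LX LY) simp
  have mse_eq: "mse M D Lf Lh h s z \<zeta> = (\<Sum>u\<le>Ng Lf Lh. \<Sum>p<Lh. cw h p * (\<Sum>q\<in>{-int p..int p}. V u p q (\<zeta> u p q)))"
    for \<zeta>
  proof -
    have "mse M D Lf Lh h s z \<zeta> = (LINT \<omega>|M. (\<Sum>u\<le>Ng Lf Lh. \<Sum>p<Lh. cw h p * (\<Sum>q\<in>{-int p..int p}.
        (cmod ((\<Sum>k\<in>{-int p..int p}. Xf Lf (f \<omega>) u p k * \<zeta> u p q k) - Xf Lf (s \<omega>) u p q))\<^sup>2)))"
      unfolding mse_def f_def by (simp only: pointwise[OF D_cont D_orth])
    also have "\<dots> = (\<Sum>u\<le>Ng Lf Lh. \<Sum>p<Lh. cw h p * (\<Sum>q\<in>{-int p..int p}. V u p q (\<zeta> u p q)))"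
      unfolding V_def using IV by (simp add: Bochner_Integration.integrable_sum)
    finally show ?thesis .
  qed
  have matA_eq: "matA M Lf s z p u k' k = (LINT \<omega>|M. Xf Lf (f \<omega>) u p k * cnj (Xf Lf (f \<omega>) u p k'))" for p u k' k
  proof -
    have "(LINT \<omega>|M. Xf Lf (f \<omega>) u p k * cnj (Xf Lf (f \<omega>) u p k'))
      = (\<Sum>n\<le>Lf\<^sup>2 - 1. \<Sum>n'\<le>Lf\<^sup>2 - 1. triple n p k u * cnj (triple n' p k' u) * (LINT \<omega>|M. f \<omega> n * cnj (f \<omega> n')))"
      unfolding Xf_def by (rule E_bilin) (auto intro: Lfn)
    also have "\<dots> = matA M Lf s z p u k' k"
      unfolding matA_def f_def cov_def
      by (intro sum.cong refl) (subst E_pair[OF Ls Lz Ls Lz], simp add: uncorr1 uncorr2)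
    finally show ?thesis by simp
  qed
  have vecb_eq: "vecb M Lf s p q u k' = (LINT \<omega>|M. Xf Lf (s \<omega>) u p q * cnj (Xf Lf (f \<omega>) u p k'))" for p q u k'
  proof -
    have "(LINT \<omega>|M. Xf Lf (s \<omega>) u p q * cnj (Xf Lf (f \<omega>) u p k'))
      = (\<Sum>n\<le>Lf\<^sup>2 - 1. \<Sum>n'\<le>Lf\<^sup>2 - 1. triple n p q u * cnj (triple n' p k' u) * (LINT \<omega>|M. s \<omega> n * cnj (f \<omega> n')))"
      unfolding Xf_def by (rule E_bilin) (auto intro: Lfn Ls)
    also have "\<dots> = vecb M Lf s p q u k'"
      unfolding vecb_def f_def cov_def
      by (intro sum.cong refl) (subst E_pair1[OF Ls Ls Lz], simp add: uncorr1)
    finally show ?thesis by simp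
  qed
  have ne_iff: "normal_eq M Lf s z \<zeta> p q u \<longleftrightarrow>
     (\<forall>k'\<in>{-int p..int p}. (\<Sum>k\<in>{-int p..int p}. (LINT \<omega>|M. Xf Lf (f \<omega>) u p k * cnj (Xf Lf (f \<omega>) u p k')) * \<zeta> u p q k)
        = (LINT \<omega>|M. Xf Lf (s \<omega>) u p q * cnj (Xf Lf (f \<omega>) u p k')))" for \<zeta> p q u
    unfolding normal_eq_def matA_eq vecb_eq ..
  have cw0: "0 \<le> cw h p" for p
    unfolding cw_def Hs_def by (intro mult_nonneg_nonneg divide_nonneg_pos sum_nonneg) auto
  show ?thesis
  proof (intro conjI allI impI ballI)
    fix \<zeta> \<zeta>'
    assume A: "\<forall>p<Lh. \<forall>q\<in>{-int p..int p}. \<forall>u\<le>Ng Lf Lh. normal_eq M Lf s z \<zeta> p q u"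
    have "V u p q (\<zeta> u p q) \<le> V u p q (\<zeta>' u p q)" if "u \<le> Ng Lf Lh" "p < Lh" "q \<in> {-int p..int p}" for u p q
      unfolding V_def
      by (rule block_suff[where X="\<lambda>k \<omega>. Xf Lf (f \<omega>) u p k"]) (use A that LX LY ne_iff in auto)
    thus "mse M D Lf Lh h s z \<zeta> \<le> mse M D Lf Lh h s z \<zeta>'"
      unfolding mse_eq by (intro sum_mono mult_left_mono cw0) auto
  next
    fix \<zeta> p q u
    assume min: "\<forall>\<zeta>'. mse M D Lf Lh h s z \<zeta> \<le> mse M D Lf Lh h s z \<zeta>'"
      and p: "p < Lh" and q: "q \<in> {-int p..int p}" and u: "u \<le> Ng Lf Lh"
      and H: "(\<Sum>q'\<in>{-int p..int p}. (cmod (h p q'))\<^sup>2) \<noteq> 0"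
    show "normal_eq M Lf s z \<zeta> p q u"
    proof (rule ccontr)
      assume N: "\<not> normal_eq M Lf s z \<zeta> p q u"
      obtain \<phi> where \<phi>: "V u p q \<phi> < V u p q (\<zeta> u p q)"
        unfolding V_def
        by (rule exE[OF block_nec[where X="\<lambda>k \<omega>. Xf Lf (f \<omega>) u p k"]]) (use N LX LY ne_iff in auto)
      define \<zeta>' where "\<zeta>' = \<zeta>(u := (\<zeta> u)(p := (\<zeta> u p)(q := \<phi>)))"
      have cwp: "0 < cw h p"
      proof -
        have "0 \<le> Hs h p" unfolding Hs_def by (intro sum_nonneg) auto
        with H have "0 < Hs h p" unfolding Hs_def by linarith
        thus ?thesis unfolding cw_def by (intro mult_pos_pos divide_pos_pos) auto
      qed
      have "mse M D Lf Lh h s z \<zeta>' < mse M D Lf Lh h s z \<zeta>"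
        unfolding mse_eq
      proof (rule sum_strict_one[where a=u])
        show "(\<Sum>p<Lh. cw h p * (\<Sum>q\<in>{-int p..int p}. V u p q (\<zeta>' u p q)))
            < (\<Sum>p<Lh. cw h p * (\<Sum>q\<in>{-int p..int p}. V u p q (\<zeta> u p q)))"
        proof (rule sum_strict_one[where a=p])
          show "cw h p * (\<Sum>q\<in>{-int p..int p}. V u p q (\<zeta>' u p q))
              < cw h p * (\<Sum>q\<in>{-int p..int p}. V u p q (\<zeta> u p q))"
          proof (rule mult_strict_left_mono[OF _ cwp], rule sum_strict_one[where a=q])
            show "V u p q (\<zeta>' u p q) < V u p q (\<zeta> u p q)" using \<phi> by (simp add: \<zeta>'_def)
          qed (use q in \<open>auto simp: \<zeta>'_def\<close>)
        qed (use p in \<open>auto simp: \<zeta>'_def\<close>)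
      qed (use u in \<open>auto simp: \<zeta>'_def\<close>)
      with min show False by (meson not_le)
    qed
  qed
qed

end
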